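(* Let \[T:=\tfrac{1}{\sqrt2}(s_1+s_2),\qquad V:=\tfrac{1}{\sqrt2}(s_1-s_2)(s_1s_1^*-s_2s_2^* ),\qquad R:=u+u^*.\] Then the fixed-point algebra $\mathcal{Q}_2^\sigma=\{a\in\mathcal{Q}_2:\sigma(a)=a\}$ satisfies \[\mathcal{Q}_2^\sigma=C^*(T,V,R)=C^*\big(xu^h+\sigma(x)u^{-h}\;:\;x\in\mathcal{O}_2,\ h\in\mathbb{Z}\big).\]
   Context: $\mathcal{Q}_2$ is the universal unital $C^*$-algebra generated by a unitary $u$ and an isometry $s_2$ subject to $s_2u=u^2s_2$ and $s_2s_2^*+us_2s_2^*u^{*}=1$. Put $s_1:=us_2$ and $\mathcal{O}_2:=C^*(s_1,s_2)\subset\mathcal{Q}_2$ (a copy of the Cuntz algebra). Let $\sigma$ be the $^*$-automorphism of $\mathcal{Q}_2$ determined by $\sigma(s_2)=s_1$ and $\sigma(u)=u^*$; it has order 2, satisfies $\sigma(s_1)=s_2$, and restricts to the flip-flop automorphism of $\mathcal{O}_2$ exchanging $s_1$ and $s_2$. *)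

theory Defs
  imports "HOL-Analysis.Analysis"
begin

text \<open>A unital C*-algebra: a real Banach algebra with unit (norm 1 = 1) carrying a
complex scalar multiplication sc extending scaleR, and an involution st satisfying the
C*-identity.\<close>

definition cstar_algebra ::
  "(complex \<Rightarrow> 'a::{banach,real_normed_algebra_1} \<Rightarrow> 'a) \<Rightarrow> ('a \<Rightarrow> 'a) \<Rightarrow> bool"
  where "cstar_algebra sc st \<longleftrightarrow>
    (\<forall>a. sc 1 a = a) \<and>
    (\<forall>c d a. sc c (sc d a) = sc (c * d) a) \<and>
    (\<forall>c a b. sc c (a + b) = sc c a + sc c b) \<and>
    (\<forall>c d a. sc (c + d) a = sc c a + sc d a) \<and>
    (\<forall>r a. sc (complex_of_real r) a = scaleR r a) \<and>
    (\<forall>c a b. sc c (a * b) = sc c a * b \<and> sc c (a * b) = a * sc c b) \<and>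
    (\<forall>c a. norm (sc c a) = cmod c * norm a) \<and>
    (\<forall>a. st (st a) = a) \<and>
    (\<forall>a b. st (a + b) = st a + st b) \<and>
    (\<forall>c a. st (sc c a) = sc (cnj c) (st a)) \<and>
    (\<forall>a b. st (a * b) = st b * st a) \<and>
    (\<forall>a. norm (st a * a) = (norm a)\<^sup>2)"

definition cstar_gen ::
  "(complex \<Rightarrow> 'a::{banach,real_normed_algebra_1} \<Rightarrow> 'a) \<Rightarrow> ('a \<Rightarrow> 'a) \<Rightarrow> 'a set \<Rightarrow> 'a set"
  where "cstar_gen sc st S = \<Inter>{B. S \<subseteq> B \<and> 1 \<in> B \<and> closed B \<and>
     (\<forall>a\<in>B. \<forall>b\<in>B. a + b \<in> B \<and> a * b \<in> B) \<and>
     (\<forall>c. \<forall>a\<in>B. sc c a \<in> B) \<and> (\<forall>a\<in>B. st a \<in> B)}"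

definition star_automorphism ::
  "(complex \<Rightarrow> 'a::{banach,real_normed_algebra_1} \<Rightarrow> 'a) \<Rightarrow> ('a \<Rightarrow> 'a) \<Rightarrow> ('a \<Rightarrow> 'a) \<Rightarrow> bool"
  where "star_automorphism sc st f \<longleftrightarrow> bij f \<and>
    (\<forall>a b. f (a + b) = f a + f b \<and> f (a * b) = f a * f b) \<and>
    (\<forall>c a. f (sc c a) = sc c (f a)) \<and> (\<forall>a. f (st a) = st (f a)) \<and> f 1 = 1"

definition upow :: "('a \<Rightarrow> 'a) \<Rightarrow> 'a::real_normed_algebra_1 \<Rightarrow> int \<Rightarrow> 'a"
  where "upow st u h = (if 0 \<le> h then u ^ nat h else st u ^ nat (- h))"

end

theory Submission
  imports Defs "HOL-Computational_Algebra.Formal_Power_Series"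
begin

locale Q2 =
  fixes sc :: "complex \<Rightarrow> 'a::{banach,real_normed_algebra_1} \<Rightarrow> 'a" and st :: "'a \<Rightarrow> 'a"
    and u s2 :: "'a" and \<sigma> :: "'a \<Rightarrow> 'a"
  assumes cstar: "cstar_algebra sc st"
    and gen: "cstar_gen sc st {u, s2} = UNIV"
    and unitary1: "st u * u = 1" and unitary2: "u * st u = 1"
    and isometry: "st s2 * s2 = 1"
    and rel1: "s2 * u = u ^ 2 * s2"
    and rel2: "s2 * st s2 + u * s2 * st s2 * st u = 1"
    and aut: "star_automorphism sc st \<sigma>"
    and sigma_s2: "\<sigma> s2 = u * s2"
    and sigma_u: "\<sigma> u = st u"
begin

lemma sc_one: "sc 1 a = a" using cstar unfolding cstar_algebra_def by fast
lemma sc_sc: "sc c (sc d a) = sc (c * d) a" using cstar unfolding cstar_algebra_def by fast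
lemma sc_add: "sc c (a + b) = sc c a + sc c b" using cstar unfolding cstar_algebra_def by fast
lemma sc_add2: "sc (c + d) a = sc c a + sc d a" using cstar unfolding cstar_algebra_def by fast
lemma sc_real: "sc (complex_of_real r) a = scaleR r a" using cstar unfolding cstar_algebra_def by fast
lemma sc_multL: "sc c (a * b) = sc c a * b" using cstar unfolding cstar_algebra_def by fast
lemma sc_multR: "sc c (a * b) = a * sc c b" using cstar unfolding cstar_algebra_def by fast
lemma norm_sc: "norm (sc c a) = cmod c * norm a" using cstar unfolding cstar_algebra_def by fast
lemma st_st[simp]: "st (st a) = a" using cstar unfolding cstar_algebra_def by fast
lemma st_add: "st (a + b) = st a + st b" using cstar unfolding cstar_algebra_def by fast
lemma st_sc: "st (sc c a) = sc (cnj c) (st a)" using cstar unfolding cstar_algebra_def by fast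
lemma st_mult: "st (a * b) = st b * st a" using cstar unfolding cstar_algebra_def by fast
lemma cstar_id: "norm (st a * a) = (norm a)\<^sup>2" using cstar unfolding cstar_algebra_def by fast

lemma st_zero[simp]: "st 0 = 0"
  using st_add[of 0 0] by simp
lemma st_minus: "st (- a) = - st a"
  using st_add[of a "-a"] minus_unique[of "st a" "st (-a)"] by simp
lemma st_diff: "st (a - b) = st a - st b"
  using st_add[of a "-b"] st_minus[of b] by simp
lemma st_scaleR: "st (scaleR r a) = scaleR r (st a)"
  using st_sc[of "complex_of_real r" a] by (simp add: sc_real)
lemma st_one[simp]: "st 1 = 1"
proof -
  have "st 1 = st 1 * st (st 1)" by simp
  also have "\<dots> = st (st 1 * 1)" by (rule st_mult[symmetric])
  finally show ?thesis by simp
qed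
lemma st_pow: "st (a ^ n) = st a ^ n"
  by (induct n) (simp_all add: st_mult power_commutes)

lemma norm_st_le: "norm a \<le> norm (st a)"
proof (cases "norm a = 0")
  case False
  have "(norm a)^2 \<le> norm (st a) * norm a" using cstar_id[of a] norm_mult_ineq[of "st a" a] by simp
  then show ?thesis using False by (simp add: power2_eq_square)
qed simp

lemma norm_st[simp]: "norm (st a) = norm a"
  using norm_st_le[of a] norm_st_le[of "st a"] by simp

lemma sc_zero[simp]: "sc c 0 = 0"
  using sc_add[of c 0 0] by simp
lemma sc_minus: "sc c (- a) = - sc c a"
  using sc_add[of c a "-a"] minus_unique[of "sc c a" "sc c (-a)"] by simp
lemma sc_diff: "sc c (a - b) = sc c a - sc c b"
  using sc_add[of c a "-b"] sc_minus[of c b] by simp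
lemma sc_zero2[simp]: "sc 0 a = 0"
  using sc_real[of 0 a] by simp
lemma sc_neg2: "sc (- c) a = - sc c a"
  using sc_add2[of c "-c" a] minus_unique[of "sc c a" "sc (-c) a"] by simp

lemma bl_st: "bounded_linear st"
  by (rule bounded_linear_intro[where K=1]) (simp_all add: st_add st_scaleR)
lemma bl_sc: "bounded_linear (sc c)"
  by (rule bounded_linear_intro[where K="cmod c"]) (simp_all add: sc_add norm_sc flip: sc_real add: sc_sc mult.commute)

lemma sig_add: "\<sigma> (a + b) = \<sigma> a + \<sigma> b" using aut unfolding star_automorphism_def by fast
lemma sig_mult: "\<sigma> (a * b) = \<sigma> a * \<sigma> b" using aut unfolding star_automorphism_def by fast
lemma sig_sc: "\<sigma> (sc c a) = sc c (\<sigma> a)" using aut unfolding star_automorphism_def by fast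
lemma sig_st: "\<sigma> (st a) = st (\<sigma> a)" using aut unfolding star_automorphism_def by fast
lemma sig_one[simp]: "\<sigma> 1 = 1" using aut unfolding star_automorphism_def by fast
lemma sig_zero[simp]: "\<sigma> 0 = 0" using sig_add[of 0 0] by simp
lemma sig_minus: "\<sigma> (- a) = - \<sigma> a"
  using sig_add[of a "-a"] minus_unique[of "\<sigma> a" "\<sigma> (-a)"] by simp
lemma sig_diff: "\<sigma> (a - b) = \<sigma> a - \<sigma> b"
  using sig_add[of a "-b"] sig_minus[of b] by simp
lemma sig_scaleR: "\<sigma> (scaleR r a) = scaleR r (\<sigma> a)"
  using sig_sc[of "complex_of_real r" a] by (simp add: sc_real)
lemma sig_pow: "\<sigma> (a ^ n) = \<sigma> a ^ n"
  by (induct n) (simp_all add: sig_mult)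

definition coef :: "nat \<Rightarrow> real" where "coef n = (-1)^n * ((1/2::real) gchoose n)"

lemma gch_bound: "\<bar>(1/2::real) gchoose n\<bar> \<le> 1"
proof (induct n)
  case (Suc n)
  have e: "(1/2::real) gchoose (Suc n) = (1/2 - of_nat n) / of_nat (Suc n) * ((1/2::real) gchoose n)"
    using gbinomial_mult_1[of "1/2::real" n] by (simp add: field_simps)
  have "\<bar>(1/2 - of_nat n) / of_nat (Suc n)\<bar> \<le> (1::real)" by (simp add: abs_if field_simps)
  then have "\<bar>(1/2 - of_nat n) / of_nat (Suc n) * ((1/2::real) gchoose n)\<bar> \<le> 1 * 1"
    unfolding abs_mult using Suc by (intro mult_mono) auto
  then show ?case using e by simp
qed simp

lemma coef_bound: "\<bar>coef n\<bar> \<le> 1"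
  using gch_bound[of n] by (simp add: coef_def abs_mult)

lemma coef_conv: "(\<Sum>i\<le>k. coef i * coef (k - i)) = (-1)^k * ((1::real) gchoose k)"
proof -
  have "(\<Sum>i\<le>k. coef i * coef (k - i)) = (\<Sum>i\<le>k. (-1)^k * (((1/2::real) gchoose i) * ((1/2) gchoose (k - i))))"
  proof (rule sum.cong)
    fix i assume "i \<in> {..k}"
    then have "(-1::real)^i * (-1)^(k-i) = (-1)^k" by (simp flip: power_add)
    then show "coef i * coef (k - i) = (-1)^k * (((1/2::real) gchoose i) * ((1/2) gchoose (k - i)))"
      unfolding coef_def by (metis (no_types, lifting) mult.assoc mult.left_commute)
  qed simp
  also have "\<dots> = (-1)^k * (\<Sum>i=0..k. ((1/2::real) gchoose i) * ((1/2) gchoose (k - i)))"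
    by (simp add: sum_distrib_left atMost_atLeast0)
  also have "\<dots> = (-1)^k * ((1::real) gchoose k)"
    using gbinomial_Vandermonde[of "1/2::real" "1/2" k] by simp
  finally show ?thesis .
qed

lemma one_gch: "(1::real) gchoose k = (if k \<le> 1 then 1 else 0)"
proof -
  have "(1::real) gchoose k = of_nat (1 choose k)" using binomial_gbinomial[of 1 k, where 'a=real] by simp
  then show ?thesis by (cases k) (auto simp: binomial_eq_0)
qed

lemma sqrt_exists:
  fixes x :: 'a
  assumes nx: "norm x < 1" and sx: "st x = x"
  shows "\<exists>c. st c = c \<and> c * c = 1 - x \<and> (\<forall>k. k * x = x * k \<longrightarrow> k * c = c * k)"
proof -
  define f where "f n = coef n *\<^sub>R x ^ n" for n
  have nf: "norm (f n) \<le> norm x ^ n" for n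
  proof -
    have "norm (f n) = \<bar>coef n\<bar> * norm (x ^ n)" by (simp add: f_def)
    also have "\<dots> \<le> 1 * norm x ^ n"
      using coef_bound[of n] norm_power_ineq[of x n] by (intro mult_mono) auto
    finally show ?thesis by simp
  qed
  have sn: "summable (\<lambda>n. norm (f n))"
    by (rule summable_comparison_test[OF _ summable_geometric[of "norm x"]]) (use nf nx in auto)
  then have sf: "summable f" by (rule summable_norm_cancel)
  define c where "c = suminf f"
  have "c * c = (\<Sum>k. \<Sum>i\<le>k. f i * f (k - i))"
    unfolding c_def by (rule Cauchy_product[OF sn sn])
  also have "\<dots> = (\<Sum>k. ((-1)^k * ((1::real) gchoose k)) *\<^sub>R x ^ k)"
  proof -
    have "(\<Sum>i\<le>k. f i * f (k - i)) = ((-1)^k * ((1::real) gchoose k)) *\<^sub>R x ^ k" for k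
    proof -
      have "(\<Sum>i\<le>k. f i * f (k - i)) = (\<Sum>i\<le>k. (coef i * coef (k - i)) *\<^sub>R x ^ k)"
      proof (rule sum.cong)
        fix i assume "i \<in> {..k}"
        then have "x ^ i * x ^ (k - i) = x ^ k" by (simp flip: power_add)
        then show "f i * f (k - i) = (coef i * coef (k - i)) *\<^sub>R x ^ k"
          by (simp add: f_def)
      qed simp
      also have "\<dots> = (\<Sum>i\<le>k. coef i * coef (k - i)) *\<^sub>R x ^ k"
        by (simp add: scaleR_sum_left)
      finally show ?thesis by (simp add: coef_conv)
    qed
    then show ?thesis by simp
  qed
  also have "\<dots> = (\<Sum>k\<in>{0,1}. ((-1)^k * ((1::real) gchoose k)) *\<^sub>R x ^ k)"
    by (rule suminf_finite) (auto simp: one_gch)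
  also have "\<dots> = 1 - x" by (simp add: one_gch)
  finally have cc: "c * c = 1 - x" .
  have "st c = (\<Sum>n. st (f n))" unfolding c_def by (rule bounded_linear.suminf[OF bl_st sf])
  also have "\<dots> = c" unfolding c_def f_def by (simp add: st_scaleR st_pow sx)
  finally have stc: "st c = c" .
  have comm: "k * c = c * k" if kx: "k * x = x * k" for k
  proof -
    have kxn: "k * x ^ n = x ^ n * k" for n
      by (induct n) (simp_all, metis kx mult.assoc)
    have "k * c = (\<Sum>n. k * f n)" unfolding c_def by (rule suminf_mult[OF sf, symmetric])
    also have "\<dots> = (\<Sum>n. f n * k)" unfolding f_def by (simp add: kxn)
    also have "\<dots> = c * k" unfolding c_def by (rule suminf_mult2[OF sf, symmetric])
    finally show ?thesis .
  qed
  show ?thesis using cc stc comm by blast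
qed

lemma norm_unitary: assumes "st w * w = 1" shows "norm w = 1"
  using cstar_id[of w] assms norm_ge_zero[of w] by (simp add: power2_eq_1_iff)

lemma sig_sa_le1:
  assumes sk: "st k = k" and nk: "norm k < 1"
  shows "norm (\<sigma> k) \<le> 1"
proof -
  have "norm k * norm k \<le> norm k * 1" using nk by (intro mult_left_mono) auto
  then have "norm (k * k) < 1"
    using norm_mult_ineq[of k k] nk by linarith
  moreover have "st (k * k) = k * k" by (simp add: st_mult sk)
  ultimately obtain c where stc: "st c = c" and cc: "c * c = 1 - k * k"
    and comm: "\<And>y. y * (k * k) = (k * k) * y \<Longrightarrow> y * c = c * y"
    using sqrt_exists by blast
  have kc: "k * c = c * k" using comm[of k] by (simp add: mult.assoc)
  define w where "w = k + sc \<i> c"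
  have stw: "st w = k - sc \<i> c" unfolding w_def by (simp add: st_add st_sc sk stc sc_neg2)
  have "st w * w = k * k + (k * sc \<i> c - sc \<i> c * k) - sc \<i> c * sc \<i> c"
    unfolding stw by (simp add: w_def algebra_simps)
  also have "k * sc \<i> c - sc \<i> c * k = 0"
    by (simp flip: sc_multR sc_multL add: kc)
  also have "sc \<i> c * sc \<i> c = - (c * c)"
    by (simp flip: sc_multR sc_multL add: sc_sc sc_neg2 sc_one)
  finally have u1: "st w * w = 1" using cc by simp
  have sw: "st (\<sigma> w) * \<sigma> w = 1" using u1 by (metis sig_mult sig_one sig_st)
  have kw: "k = scaleR (1/2) (w + st w)"
  proof -
    have "w + st w = k + k" unfolding stw by (simp add: w_def)
    then show ?thesis by (simp flip: scaleR_2)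
  qed
  have "\<sigma> k = scaleR (1/2) (\<sigma> w + st (\<sigma> w))"
    by (subst kw) (simp add: sig_scaleR sig_add sig_st)
  then have "norm (\<sigma> k) \<le> (1/2) * (norm (\<sigma> w) + norm (st (\<sigma> w)))"
    using norm_triangle_ineq[of "\<sigma> w" "st (\<sigma> w)"] by simp
  also have "\<dots> = 1" using norm_unitary[OF sw] by simp
  finally show ?thesis .
qed

lemma sig_sa_le:
  assumes sk: "st k = k"
  shows "norm (\<sigma> k) \<le> norm k"
proof (rule field_le_epsilon)
  fix e :: real assume e: "e > 0"
  define t where "t = norm k + e"
  have t: "t > 0" "norm k < t" using e norm_ge_zero[of k] unfolding t_def by linarith+
  have "st (scaleR (1/t) k) = scaleR (1/t) k" by (simp add: st_scaleR sk)
  moreover have "norm (scaleR (1/t) k) < 1" using t by (simp add: field_simps)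
  ultimately have "norm (\<sigma> (scaleR (1/t) k)) \<le> 1" by (rule sig_sa_le1)
  then have "norm (\<sigma> k) / t \<le> 1" using t by (simp add: sig_scaleR divide_inverse mult.commute)
  then show "norm (\<sigma> k) \<le> norm k + e" using t by (simp add: t_def field_simps)
qed

lemma sig_norm: "norm (\<sigma> a) \<le> norm a"
proof -
  have "(norm (\<sigma> a))^2 = norm (\<sigma> (st a * a))"
    by (simp add: sig_mult sig_st cstar_id)
  also have "\<dots> \<le> norm (st a * a)" by (rule sig_sa_le) (simp add: st_mult)
  also have "\<dots> = (norm a)^2" by (rule cstar_id)
  finally show ?thesis by (simp add: power2_le_iff_abs_le abs_le_iff)
qed

lemma bl_sig: "bounded_linear \<sigma>"
  by (rule bounded_linear_intro[where K=1]) (simp_all add: sig_add sig_scaleR sig_norm)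

lemma cont_sig: "continuous_on S \<sigma>"
  by (intro linear_continuous_on bl_sig)

definition csub :: "'a set \<Rightarrow> bool" where
  "csub B \<longleftrightarrow> 1 \<in> B \<and> closed B \<and> (\<forall>a\<in>B. \<forall>b\<in>B. a + b \<in> B \<and> a * b \<in> B) \<and>
     (\<forall>c. \<forall>a\<in>B. sc c a \<in> B) \<and> (\<forall>a\<in>B. st a \<in> B)"

lemma gen_eq: "cstar_gen sc st S = \<Inter>{B. S \<subseteq> B \<and> csub B}"
  unfolding cstar_gen_def csub_def by blast

lemma gen_csub: "csub (cstar_gen sc st S)"
  unfolding gen_eq csub_def by (auto intro: closed_Inter)

lemma gen_sub: "S \<subseteq> cstar_gen sc st S"
  unfolding gen_eq by blast

lemma gen_min: "S \<subseteq> B \<Longrightarrow> csub B \<Longrightarrow> cstar_gen sc st S \<subseteq> B"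
  unfolding gen_eq by blast

lemma gen_one: "1 \<in> cstar_gen sc st S" using gen_csub unfolding csub_def by blast
lemma gen_add: "a \<in> cstar_gen sc st S \<Longrightarrow> b \<in> cstar_gen sc st S \<Longrightarrow> a + b \<in> cstar_gen sc st S"
  using gen_csub unfolding csub_def by blast
lemma gen_mult: "a \<in> cstar_gen sc st S \<Longrightarrow> b \<in> cstar_gen sc st S \<Longrightarrow> a * b \<in> cstar_gen sc st S"
  using gen_csub unfolding csub_def by blast
lemma gen_sc: "a \<in> cstar_gen sc st S \<Longrightarrow> sc c a \<in> cstar_gen sc st S"
  using gen_csub unfolding csub_def by blast
lemma gen_st: "a \<in> cstar_gen sc st S \<Longrightarrow> st a \<in> cstar_gen sc st S"
  using gen_csub unfolding csub_def by blast
lemma gen_closed: "closed (cstar_gen sc st S)"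
  using gen_csub unfolding csub_def by blast
lemma gen_scaleR: "a \<in> cstar_gen sc st S \<Longrightarrow> scaleR r a \<in> cstar_gen sc st S"
  using gen_sc[of a S "complex_of_real r"] by (simp add: sc_real)
lemma gen_zero: "0 \<in> cstar_gen sc st S"
  using gen_scaleR[OF gen_one, of 0 S] by simp
lemma gen_minus: "a \<in> cstar_gen sc st S \<Longrightarrow> - a \<in> cstar_gen sc st S"
  using gen_scaleR[of a S "-1"] by simp
lemma gen_diff: "a \<in> cstar_gen sc st S \<Longrightarrow> b \<in> cstar_gen sc st S \<Longrightarrow> a - b \<in> cstar_gen sc st S"
  using gen_add[OF _ gen_minus, of a S b] by simp

lemma closure_bin:
  fixes f :: "'a \<Rightarrow> 'a \<Rightarrow> 'a"
  assumes cf: "continuous_on UNIV (\<lambda>p. f (fst p) (snd p))"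
    and A: "\<And>a b. a \<in> A \<Longrightarrow> b \<in> A \<Longrightarrow> f a b \<in> A"
    and a: "a \<in> closure A" and b: "b \<in> closure A"
  shows "f a b \<in> closure A"
proof -
  have "(\<lambda>p. f (fst p) (snd p)) ` closure (A \<times> A) \<subseteq> closure A"
    by (rule image_closure_subset) (use cf A in \<open>auto intro: continuous_on_subset closure_subset[THEN subsetD]\<close>)
  moreover have "(a, b) \<in> closure (A \<times> A)" using a b by (simp add: closure_Times)
  ultimately show ?thesis by force
qed

lemma closure_un:
  fixes f :: "'a \<Rightarrow> 'a"
  assumes cf: "continuous_on UNIV f"
    and A: "\<And>a. a \<in> A \<Longrightarrow> f a \<in> A"
    and a: "a \<in> closure A"
  shows "f a \<in> closure A"
proof -
  have "f ` closure A \<subseteq> closure A"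
    by (rule image_closure_subset) (use cf A in \<open>auto intro: continuous_on_subset closure_subset[THEN subsetD]\<close>)
  then show ?thesis using a by blast
qed

lemma closure_csub:
  assumes "1 \<in> A" and "\<And>a b. a \<in> A \<Longrightarrow> b \<in> A \<Longrightarrow> a + b \<in> A"
    and "\<And>a b. a \<in> A \<Longrightarrow> b \<in> A \<Longrightarrow> a * b \<in> A"
    and "\<And>c a. a \<in> A \<Longrightarrow> sc c a \<in> A"
    and "\<And>a. a \<in> A \<Longrightarrow> st a \<in> A"
  shows "csub (closure A)"
  unfolding csub_def
proof (intro conjI ballI allI)
  show "1 \<in> closure A" using assms(1) closure_subset by blast
  show "closed (closure A)" by simp
  fix a b assume a: "a \<in> closure A" and b: "b \<in> closure A"
  show "a + b \<in> closure A"
    by (rule closure_bin[of "(+)", OF _ assms(2) a b]) (intro continuous_intros)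
  show "a * b \<in> closure A"
    by (rule closure_bin[of "(*)", OF _ assms(3) a b]) (intro continuous_intros)
next
  fix c a assume a: "a \<in> closure A"
  show "sc c a \<in> closure A"
    by (rule closure_un[OF _ assms(4) a]) (intro linear_continuous_on bl_sc)
next
  fix a assume a: "a \<in> closure A"
  show "st a \<in> closure A"
    by (rule closure_un[OF _ assms(5) a]) (intro linear_continuous_on bl_st)
qed

lemma csub_fix: "csub {a. \<sigma> a = a}"
  unfolding csub_def
  by (auto simp: sig_add sig_mult sig_sc sig_st intro!: closed_Collect_eq cont_sig continuous_on_id)

lemma csub_fix2: "csub {a. \<sigma> (\<sigma> a) = a}"
  unfolding csub_def
  by (auto simp: sig_add sig_mult sig_sc sig_st intro!: closed_Collect_eq continuous_on_compose2[OF cont_sig cont_sig] continuous_on_id)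


definition "s1 = u * s2"
definition "W = s1 * st s1 - s2 * st s2"
definition "rr = 1 / sqrt (2::real)"
definition "T = rr *\<^sub>R (s1 + s2)"
definition "t2 = rr *\<^sub>R (s1 - s2)"
definition "V = t2 * W"
definition "R = u + st u"

lemma rr2: "rr * rr = 1/2" unfolding rr_def by (simp add: field_simps)

lemma c1: "st s1 * s1 = 1"
proof -
  have "st s1 * s1 = st s2 * (st u * u) * s2" by (simp add: s1_def st_mult mult.assoc)
  then show ?thesis by (simp add: unitary1 isometry)
qed
lemma c2: "st s2 * s2 = 1" by (rule isometry)
lemma c5: "s1 * st s1 + s2 * st s2 = 1"
  using rel2 by (simp add: s1_def st_mult mult.assoc add.commute)
lemma c4: "st s2 * s1 = 0"
proof -
  let ?y = "st s2 * s1"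
  have "st ?y * ?y = st s1 * (s2 * st s2) * s1" by (simp add: st_mult mult.assoc)
  also have "s2 * st s2 = 1 - s1 * st s1" using c5 by (simp add: algebra_simps)
  also have "st s1 * (1 - s1 * st s1) * s1 = 0"
    by (simp add: algebra_simps c1)
  finally have "norm ?y ^ 2 = 0" using cstar_id[of ?y] by simp
  then show ?thesis by simp
qed
lemma c3: "st s1 * s2 = 0"
  using arg_cong[OF c4, of st] by (simp add: st_mult)

lemma rel1': "s2 * u = u * (u * s2)"
  using rel1 by (simp add: power2_eq_square mult.assoc)

lemma us1: "u * s1 = s2 * u" by (simp add: s1_def rel1')
lemma sus1: "st u * s1 = s2" by (simp add: s1_def mult.assoc[symmetric] unitary1)
lemma us2: "u * s2 = s1" by (simp add: s1_def)
lemma sus2: "st u * s2 = s1 * st u"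
proof -
  have "st u * s2 = st u * (s2 * u) * st u" by (simp add: mult.assoc unitary2)
  also have "\<dots> = (st u * u) * (u * s2) * st u" by (simp add: rel1' mult.assoc)
  finally show ?thesis by (simp add: unitary1 s1_def)
qed
lemma sus2': "st u * (st u * s2) = s2 * st u"
proof -
  have "st u * (st u * s2) = st u * (st u * (s2 * u)) * st u" by (simp add: mult.assoc unitary2)
  also have "\<dots> = s2 * st u" by (simp add: rel1' mult.assoc[symmetric] unitary1)
  finally show ?thesis .
qed

lemma stW: "st W = W" by (simp add: W_def st_diff st_mult)
lemma WW: "W * W = 1"
proof -
  have "W * W = s1 * (st s1 * s1) * st s1 - s1 * (st s1 * s2) * st s2 - s2 * (st s2 * s1) * st s1 + s2 * (st s2 * s2) * st s2"
    by (simp add: W_def algebra_simps)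
  also have "\<dots> = 1" by (simp add: c1 c2 c3 c4 c5)
  finally show ?thesis .
qed
lemma Ws1: "W * s1 = s1" by (simp add: W_def algebra_simps c1 c4)
lemma Ws2: "W * s2 = - s2" by (simp add: W_def algebra_simps c2 c3)
lemma WT: "W * T = t2" by (simp add: T_def t2_def algebra_simps Ws1 Ws2)
lemma Wt2: "W * t2 = T" by (simp add: T_def t2_def algebra_simps Ws1 Ws2)
lemma WTW: "W * T * W = V" by (simp add: WT V_def)
lemma WVW: "W * V * W = T" by (simp add: V_def mult.assoc WW) (simp add: mult.assoc[symmetric] Wt2)
lemma WsTW: "W * st T * W = st V"
  using arg_cong[OF WTW, of st] by (simp add: st_mult stW mult.assoc)
lemma WsVW: "W * st V * W = st T"
  using arg_cong[OF WVW, of st] by (simp add: st_mult stW mult.assoc)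
lemma VW: "V * W = t2" by (simp add: V_def mult.assoc WW)
lemma st_t2: "st t2 = st T * W"
  using arg_cong[OF WT, of st] by (simp add: st_mult stW)

lemma s1_dec: "s1 = rr *\<^sub>R T + rr *\<^sub>R (V * W)"
proof -
  have "rr *\<^sub>R T + rr *\<^sub>R (V * W) = (rr * rr) *\<^sub>R (s1 + s2 + (s1 - s2))"
    by (simp add: VW T_def t2_def algebra_simps)
  also have "\<dots> = s1" by (simp add: rr2 flip: scaleR_2)
  finally show ?thesis by simp
qed
lemma s2_dec: "s2 = rr *\<^sub>R T - rr *\<^sub>R (V * W)"
proof -
  have "rr *\<^sub>R T - rr *\<^sub>R (V * W) = (rr * rr) *\<^sub>R (s1 + s2 - (s1 - s2))"
    by (simp add: VW T_def t2_def algebra_simps)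
  also have "\<dots> = s2" by (simp add: rr2 flip: scaleR_2)
  finally show ?thesis by simp
qed
lemma sts1_dec: "st s1 = rr *\<^sub>R st T + rr *\<^sub>R (st T * W)"
proof -
  have "rr *\<^sub>R st T + rr *\<^sub>R (st T * W) = st (rr *\<^sub>R T + rr *\<^sub>R (V * W))"
    by (simp add: st_add st_scaleR VW st_t2)
  then show ?thesis using s1_dec by simp
qed
lemma sts2_dec: "st s2 = rr *\<^sub>R st T - rr *\<^sub>R (st T * W)"
proof -
  have "rr *\<^sub>R st T - rr *\<^sub>R (st T * W) = st (rr *\<^sub>R T - rr *\<^sub>R (V * W))"
    by (simp add: st_diff st_scaleR VW st_t2)
  then show ?thesis using s2_dec by simp
qed

lemma s2_dec': "s2 = rr *\<^sub>R T + ((- rr) *\<^sub>R V) * W"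
  using s2_dec by simp
lemma sts2_dec': "st s2 = rr *\<^sub>R st T + ((- rr) *\<^sub>R st T) * W"
  using sts2_dec by simp
lemma s1_dec': "s1 = rr *\<^sub>R T + (rr *\<^sub>R V) * W"
  using s1_dec by simp
lemma sts1_dec': "st s1 = rr *\<^sub>R st T + (rr *\<^sub>R st T) * W"
  using sts1_dec by simp

lemma sig_s1: "\<sigma> s1 = s2" by (simp add: s1_def sig_mult sigma_u sigma_s2 mult.assoc[symmetric] unitary1)
lemma sig_s2: "\<sigma> s2 = s1" by (simp add: s1_def sigma_s2)
lemma sig_W: "\<sigma> W = - W" by (simp add: W_def sig_diff sig_mult sig_st sig_s1 sig_s2)
lemma sig_T: "\<sigma> T = T" by (simp add: T_def sig_scaleR sig_add sig_s1 sig_s2 add.commute)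
lemma sig_t2: "\<sigma> t2 = - t2" by (simp add: t2_def sig_scaleR sig_diff sig_s1 sig_s2 scaleR_diff_right)
lemma sig_V: "\<sigma> V = V" by (simp add: V_def sig_mult sig_t2 sig_W)
lemma sig_R: "\<sigma> R = R" by (simp add: R_def sig_add sig_st sigma_u add.commute)

lemma D1: "W * (u - st u) = (-2) *\<^sub>R (st V * R * T)"
proof -
  have Rs1: "R * s1 = s2 * u + s2" by (simp add: R_def distrib_right us1 sus1)
  have Rs2: "R * s2 = s1 + s1 * st u" by (simp add: R_def distrib_right us2 sus2)
  have "st t2 * R * T = (rr * rr) *\<^sub>R ((st s1 - st s2) * (R * s1 + R * s2))"
    by (simp add: t2_def T_def st_scaleR st_diff mult.assoc distrib_left scaleR_add_right)
  also have "(st s1 - st s2) * (R * s1 + R * s2) = st u - u"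
    unfolding Rs1 Rs2
    by (simp add: algebra_simps) (simp add: mult.assoc[symmetric] c1 c2 c3 c4)
  finally have e: "st t2 * R * T = (1/2) *\<^sub>R (st u - u)" by (simp add: rr2)
  have "st V * R * T = W * (st t2 * R * T)" by (simp add: V_def st_mult stW mult.assoc)
  also have "\<dots> = (1/2) *\<^sub>R (W * (st u - u))" by (simp add: e)
  finally have "(-2) *\<^sub>R (st V * R * T) = (-2::real) *\<^sub>R ((1/2) *\<^sub>R (W * (st u - u)))" by simp
  also have "\<dots> = W * (u - st u)" by (simp add: algebra_simps)
  finally show ?thesis by simp
qed

abbreviation "up h \<equiv> upow st u h"

lemma up0[simp]: "up 0 = 1" by (simp add: upow_def)
lemma up1: "up 1 = u" by (simp add: upow_def)
lemma upm1: "up (-1) = st u" by (simp add: upow_def)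

lemma up_succ: "up (h + 1) = up h * u"
proof (cases "h \<ge> 0")
  case True
  then have "nat (h + 1) = Suc (nat h)" by simp
  then show ?thesis using True by (simp add: upow_def power_commutes)
next
  case False
  define m where "m = nat (-(h+1))"
  have m: "nat (- h) = Suc m" "nat (-(h+1)) = m" using False by (simp_all add: m_def)
  show ?thesis
  proof (cases "h + 1 = 0")
    case True
    then have "h = -1" by simp
    then show ?thesis by (simp add: upow_def unitary1)
  next
    case False2: False
    then have "\<not> 0 \<le> h + 1" using False by simp
    have "st u ^ Suc m * u = st u ^ m" by (simp add: power_Suc2 mult.assoc unitary1 del: power_Suc)
    then show ?thesis using False False2 m by (simp add: upow_def del: power_Suc)
  qed
qed

lemma up_pred: "up (h - 1) = up h * st u"
proof -
  have "up h = up (h - 1) * u" using up_succ[of "h - 1"] by simp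
  then have "up h * st u = up (h - 1) * (u * st u)" by (simp add: mult.assoc)
  then show ?thesis by (simp add: unitary2)
qed

lemma up_add: "up (h + k) = up h * up k"
proof (induct k rule: int_induct[where k=0])
  case base then show ?case by simp
next
  case (step1 i)
  have "up (h + (i + 1)) = up (h + i) * u" using up_succ[of "h + i"] by (simp add: add.assoc)
  also have "\<dots> = up h * up (i + 1)" using step1 by (simp add: up_succ mult.assoc)
  finally show ?case .
next
  case (step2 i)
  have "up (h + (i - 1)) = up (h + i) * st u" using up_pred[of "h + i"] by (simp add: algebra_simps)
  also have "\<dots> = up h * up (i - 1)" using step2 by (simp add: up_pred mult.assoc)
  finally show ?case .
qed

lemma st_up: "st (up h) = up (- h)"
  by (cases "h = 0") (auto simp: upow_def st_pow)

lemma sig_up: "\<sigma> (up h) = up (- h)"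
  by (cases "h = 0") (auto simp: upow_def sig_pow sigma_u sig_st)

lemma u2n_s2: "u ^ (2 * n) * s2 = s2 * u ^ n"
proof (induct n)
  case (Suc n)
  have e: "2 * Suc n = 2 * n + 2" by simp
  have "u ^ (2 * Suc n) * s2 = u ^ (2 * n) * (u * (u * s2))"
    unfolding e power_add power2_eq_square by (simp add: mult.assoc)
  also have "\<dots> = (u ^ (2 * n) * s2) * u" by (simp flip: rel1' add: mult.assoc)
  also have "\<dots> = s2 * u ^ Suc n" by (simp add: Suc mult.assoc power_commutes)
  finally show ?case .
qed simp

lemma su2n_s2: "st u ^ (2 * n) * s2 = s2 * st u ^ n"
proof (induct n)
  case (Suc n)
  have e: "2 * Suc n = 2 * n + 2" by simp
  have "st u ^ (2 * Suc n) * s2 = st u ^ (2 * n) * (st u * (st u * s2))"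
    unfolding e power_add power2_eq_square by (simp add: mult.assoc)
  also have "\<dots> = (st u ^ (2 * n) * s2) * st u" by (simp add: sus2' mult.assoc)
  also have "\<dots> = s2 * st u ^ Suc n" by (simp add: Suc mult.assoc power_commutes)
  finally show ?case .
qed simp

lemma up_even_s2: "up (2 * k) * s2 = s2 * up k"
proof (cases "k \<ge> 0")
  case True
  then have "nat (2 * k) = 2 * nat k" by simp
  then show ?thesis using True by (simp add: upow_def u2n_s2)
next
  case False
  then have "nat (- (2 * k)) = 2 * nat (- k)" by simp
  then show ?thesis using False by (simp add: upow_def su2n_s2)
qed

lemma up_odd_s2: "up (2 * k + 1) * s2 = s1 * up k"
proof -
  have "up (2 * k + 1) * s2 = u * (up (2 * k) * s2)"
    using up_add[of 1 "2*k"] by (simp add: add.commute up1 mult.assoc)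
  then show ?thesis by (simp add: up_even_s2 s1_def mult.assoc)
qed

lemma up_sts2: "up h * st s2 = st s2 * up (2 * h)"
  using arg_cong[OF up_even_s2[of "-h"], of st] by (simp add: st_mult st_up)

lemma up_sts1: "up h * st s1 = st s2 * up (2 * h - 1)"
proof -
  have "st s1 = st s2 * st u" by (simp add: s1_def st_mult)
  then have "up h * st s1 = st s2 * up (2 * h) * up (-1)"
    by (simp add: mult.assoc[symmetric] up_sts2 upm1)
  then show ?thesis by (simp add: mult.assoc flip: up_add)
qed

lemma up_s1: "up h * s1 = up (h + 1) * s2"
  by (simp add: s1_def up_add up1 mult.assoc)

inductive_set O2a :: "'a set" where
  o_s1: "s1 \<in> O2a" | o_s2: "s2 \<in> O2a" | o_sts1: "st s1 \<in> O2a" | o_sts2: "st s2 \<in> O2a"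
| o_one: "1 \<in> O2a"
| o_add: "a \<in> O2a \<Longrightarrow> b \<in> O2a \<Longrightarrow> a + b \<in> O2a"
| o_mult: "a \<in> O2a \<Longrightarrow> b \<in> O2a \<Longrightarrow> a * b \<in> O2a"
| o_sc: "a \<in> O2a \<Longrightarrow> sc c a \<in> O2a"

inductive_set Sp :: "'a set" where
  sp_zero: "0 \<in> Sp"
| sp_gen: "x \<in> O2a \<Longrightarrow> x * up h \<in> Sp"
| sp_add: "a \<in> Sp \<Longrightarrow> b \<in> Sp \<Longrightarrow> a + b \<in> Sp"

lemma O2a_st: "a \<in> O2a \<Longrightarrow> st a \<in> O2a"
  by (induct rule: O2a.induct) (auto simp: st_add st_mult st_sc intro: O2a.intros)

lemma Sp_sc: "a \<in> Sp \<Longrightarrow> sc c a \<in> Sp"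
  by (induct rule: Sp.induct) (auto simp: sc_add sc_multL intro: Sp.intros O2a.intros)

lemma Sp_lmult: "a \<in> Sp \<Longrightarrow> x \<in> O2a \<Longrightarrow> x * a \<in> Sp"
proof (induct rule: Sp.induct)
  case (sp_gen y h)
  then show ?case using Sp.sp_gen[of "x * y" h] by (simp add: mult.assoc o_mult)
qed (auto simp: distrib_left intro: Sp.intros)

lemma Sp_rup: "a \<in> Sp \<Longrightarrow> a * up k \<in> Sp"
proof (induct rule: Sp.induct)
  case (sp_gen y h)
  then show ?case using Sp.sp_gen[of y "h + k"] by (simp add: mult.assoc up_add)
qed (auto simp: distrib_right intro: Sp.intros)

lemma Sp_rmult: "z \<in> Sp \<Longrightarrow> (\<And>h. up h * b \<in> Sp) \<Longrightarrow> z * b \<in> Sp"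
proof (induct rule: Sp.induct)
  case (sp_gen x h)
  then show ?case using Sp_lmult[of "up h * b" x] by (simp add: mult.assoc)
qed (auto simp: distrib_right intro: Sp.intros)

lemma up_s2_Sp: "up h * s2 \<in> Sp"
proof -
  obtain k where "h = 2 * k \<or> h = 2 * k + 1" by (metis odd_two_times_div_two_succ even_two_times_div_two)
  then show ?thesis
  proof
    assume "h = 2 * k" then show ?thesis by (simp add: up_even_s2 Sp.sp_gen o_s2)
  next
    assume "h = 2 * k + 1" then show ?thesis by (simp add: up_odd_s2 Sp.sp_gen o_s1)
  qed
qed

lemma Sp_in_up: "y \<in> O2a \<Longrightarrow> up h * y \<in> Sp"
proof (induct arbitrary: h rule: O2a.induct)
  case o_s1 then show ?case by (simp add: up_s1 up_s2_Sp)
next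
  case o_s2 then show ?case by (simp add: up_s2_Sp)
next
  case o_sts1 then show ?case by (simp add: up_sts1 Sp.sp_gen o_sts2)
next
  case o_sts2 then show ?case unfolding up_sts2 by (rule Sp.sp_gen[OF O2a.o_sts2])
next
  case o_one then show ?case using Sp.sp_gen[OF O2a.o_one, of h] by simp
next
  case (o_add a b) then show ?case by (simp add: distrib_left Sp.sp_add)
next
  case (o_mult a b)
  then show ?case using Sp_rmult[of "up h * a" b] by (simp add: mult.assoc)
next
  case (o_sc a c)
  then show ?case by (simp flip: sc_multR add: Sp_sc)
qed

lemma Sp_mult: "b \<in> Sp \<Longrightarrow> a \<in> Sp \<Longrightarrow> a * b \<in> Sp"
proof (induct rule: Sp.induct)
  case (sp_gen x h)
  have "a * x \<in> Sp" by (rule Sp_rmult[OF sp_gen(2) Sp_in_up[OF sp_gen(1)]])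
  then show ?case using Sp_rup[of "a * x" h] by (simp add: mult.assoc)
qed (auto simp: distrib_left intro: Sp.intros)

lemma Sp_st: "a \<in> Sp \<Longrightarrow> st a \<in> Sp"
proof (induct rule: Sp.induct)
  case (sp_gen x h)
  then show ?case by (simp add: st_mult st_up Sp_in_up O2a_st)
qed (auto simp: st_add intro: Sp.intros)

lemma closure_Sp: "closure Sp = UNIV"
proof -
  have "csub (closure Sp)"
    by (rule closure_csub) (auto intro: Sp_mult Sp_sc Sp_st Sp.sp_add Sp.sp_gen[OF o_one, of 0, simplified])
  moreover have "{u, s2} \<subseteq> closure Sp"
    using Sp.sp_gen[OF o_one, of 1] Sp.sp_gen[OF o_s2, of 0] closure_subset by (auto simp: up1)
  ultimately show ?thesis using gen_min[of "{u, s2}" "closure Sp"] gen by blast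
qed

definition "E a = (1/2::real) *\<^sub>R (a + \<sigma> a)"

lemma cont_E: "continuous_on UNIV E"
  unfolding E_def by (intro continuous_intros cont_sig)

lemma E_Sp:
  assumes K: "\<And>x h. x \<in> O2a \<Longrightarrow> x * up h + \<sigma> x * up (- h) \<in> cstar_gen sc st S"
  shows "a \<in> Sp \<Longrightarrow> E a \<in> cstar_gen sc st S"
proof (induct rule: Sp.induct)
  case sp_zero then show ?case by (simp add: E_def gen_zero)
next
  case (sp_gen x h)
  then show ?case using K[OF sp_gen] unfolding E_def by (simp add: sig_mult sig_up gen_scaleR)
next
  case (sp_add a b)
  have "E (a + b) = E a + E b" by (simp add: E_def sig_add algebra_simps)
  then show ?case using sp_add by (simp add: gen_add)
qed

lemma fix_in:
  assumes K: "\<And>x h. x \<in> O2a \<Longrightarrow> x * up h + \<sigma> x * up (- h) \<in> cstar_gen sc st S"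
    and a: "\<sigma> a = a"
  shows "a \<in> cstar_gen sc st S"
proof -
  have "E ` closure Sp \<subseteq> cstar_gen sc st S"
    by (rule image_closure_subset) (auto intro: continuous_on_subset[OF cont_E] gen_closed E_Sp[OF K])
  then have "E a \<in> cstar_gen sc st S" using closure_Sp by auto
  moreover have "E a = a" using a by (simp add: E_def flip: scaleR_2)
  ultimately show ?thesis by simp
qed

inductive_set TVa :: "'a set" where
  tv_T: "T \<in> TVa" | tv_V: "V \<in> TVa" | tv_sT: "st T \<in> TVa" | tv_sV: "st V \<in> TVa"
| tv_one: "1 \<in> TVa" | tv_zero: "0 \<in> TVa"
| tv_add: "a \<in> TVa \<Longrightarrow> b \<in> TVa \<Longrightarrow> a + b \<in> TVa"
| tv_mult: "a \<in> TVa \<Longrightarrow> b \<in> TVa \<Longrightarrow> a * b \<in> TVa"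
| tv_sc: "a \<in> TVa \<Longrightarrow> sc c a \<in> TVa"

abbreviation "Kc \<equiv> cstar_gen sc st {T, V, R}"

lemma TVa_gen: "a \<in> TVa \<Longrightarrow> a \<in> Kc"
  by (induct rule: TVa.induct)
     (auto intro: gen_add gen_mult gen_sc gen_st gen_one gen_zero gen_sub[THEN subsetD])

lemma TVa_sig: "a \<in> TVa \<Longrightarrow> \<sigma> a = a"
  by (induct rule: TVa.induct) (auto simp: sig_T sig_V sig_st sig_add sig_mult sig_sc)

lemma TVa_scaleR: "a \<in> TVa \<Longrightarrow> r *\<^sub>R a \<in> TVa"
  using tv_sc[of a "complex_of_real r"] by (simp add: sc_real)

lemma TVa_W: "a \<in> TVa \<Longrightarrow> W * a * W \<in> TVa"
proof (induct rule: TVa.induct)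
  case tv_T then show ?case by (simp add: WTW tv_V)
next
  case tv_V then show ?case by (simp add: WVW tv_T)
next
  case tv_sT then show ?case by (simp add: WsTW tv_sV)
next
  case tv_sV then show ?case by (simp add: WsVW tv_sT)
next
  case tv_one then show ?case by (simp add: WW TVa.tv_one)
next
  case tv_zero then show ?case by (simp add: TVa.tv_zero)
next
  case (tv_add a b) then show ?case by (simp add: algebra_simps TVa.tv_add)
next
  case (tv_mult a b)
  have "W * (a * b) * W = (W * a * W) * (W * b * W)"
    by (simp add: mult.assoc WW) (simp add: mult.assoc[symmetric] WW)
  then show ?case using tv_mult by (simp add: TVa.tv_mult)
next
  case (tv_sc a c)
  have "W * sc c a * W = sc c (W * a * W)" by (simp flip: sc_multL sc_multR)
  then show ?case using tv_sc by (simp add: TVa.tv_sc)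
qed

lemma O2a_dec: "x \<in> O2a \<Longrightarrow> \<exists>a b. a \<in> TVa \<and> b \<in> TVa \<and> x = a + b * W"
proof (induct rule: O2a.induct)
  case o_s1
  show ?case
    by (rule exI[of _ "rr *\<^sub>R T"], rule exI[of _ "rr *\<^sub>R V"])
       (intro conjI TVa_scaleR TVa.tv_T TVa.tv_V, rule s1_dec')
next
  case o_s2
  show ?case
    by (rule exI[of _ "rr *\<^sub>R T"], rule exI[of _ "(- rr) *\<^sub>R V"])
       (intro conjI TVa_scaleR TVa.tv_T TVa.tv_V, rule s2_dec')
next
  case o_sts1
  show ?case
    by (rule exI[of _ "rr *\<^sub>R st T"], rule exI[of _ "rr *\<^sub>R st T"])
       (intro conjI TVa_scaleR TVa.tv_sT TVa.tv_sT, rule sts1_dec')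
next
  case o_sts2
  show ?case
    by (rule exI[of _ "rr *\<^sub>R st T"], rule exI[of _ "(- rr) *\<^sub>R st T"])
       (intro conjI TVa_scaleR TVa.tv_sT TVa.tv_sT, rule sts2_dec')
next
  case o_one
  show ?case by (rule exI[of _ 1], rule exI[of _ 0]) (simp add: tv_one tv_zero)
next
  case (o_add x y)
  then obtain a b c d where "a \<in> TVa" "b \<in> TVa" "c \<in> TVa" "d \<in> TVa" "x = a + b * W" "y = c + d * W" by blast
  then show ?case
    by (intro exI[of _ "a + c"] exI[of _ "b + d"]) (simp add: tv_add algebra_simps)
next
  case (o_mult x y)
  then obtain a b c d where h: "a \<in> TVa" "b \<in> TVa" "c \<in> TVa" "d \<in> TVa" "x = a + b * W" "y = c + d * W" by blast
  have "x * y = (a * c + b * (W * d * W)) + (a * d + b * (W * c * W)) * W"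
    unfolding h(5,6) by (simp add: algebra_simps) (simp add: mult.assoc WW)
  then show ?case using h
    by (intro exI[of _ "a * c + b * (W * d * W)"] exI[of _ "a * d + b * (W * c * W)"])
       (simp add: tv_add tv_mult TVa_W)
next
  case (o_sc x c)
  then obtain a b where "a \<in> TVa" "b \<in> TVa" "x = a + b * W" by blast
  then show ?case
    by (intro exI[of _ "sc c a"] exI[of _ "sc c b"]) (simp add: tv_sc sc_add sc_multL)
qed

lemma pu1: "u ^ Suc n * st u = u ^ n"
  by (simp add: power_Suc2 mult.assoc unitary2 del: power_Suc)
lemma pu2: "st u ^ Suc n * u = st u ^ n"
  by (simp add: power_Suc2 mult.assoc unitary1 del: power_Suc)

lemma Kc_R: "R \<in> Kc" and Kc_T: "T \<in> Kc" and Kc_V: "V \<in> Kc"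
  using gen_sub[of "{T, V, R}"] by auto

lemma cheb: "(u ^ n + st u ^ n \<in> Kc \<and> u ^ Suc n + st u ^ Suc n \<in> Kc) \<and>
   (W * (u ^ n - st u ^ n) \<in> Kc \<and> W * (u ^ Suc n - st u ^ Suc n) \<in> Kc)"
proof (induct n)
  case 0
  have "W * (u - st u) \<in> Kc" unfolding D1
    by (intro gen_scaleR gen_mult gen_st Kc_R Kc_T Kc_V)
  then show ?case using Kc_R gen_add[OF gen_one gen_one, of "{T,V,R}"]
    by (simp add: R_def gen_zero)
next
  case (Suc n)
  have e1: "u ^ Suc (Suc n) + st u ^ Suc (Suc n) = (u ^ Suc n + st u ^ Suc n) * R - (u ^ n + st u ^ n)"
    unfolding R_def distrib_left distrib_right pu1 pu2
    by (simp add: mult.assoc del: power_Suc) (simp add: power_Suc2 del: power_Suc)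
  have e2: "W * (u ^ Suc (Suc n) - st u ^ Suc (Suc n)) = W * (u ^ Suc n - st u ^ Suc n) * R - W * (u ^ n - st u ^ n)"
  proof -
    have "(u ^ Suc n - st u ^ Suc n) * R = (u ^ Suc (Suc n) - st u ^ Suc (Suc n)) + (u ^ n - st u ^ n)"
      unfolding R_def distrib_left left_diff_distrib pu1 pu2
      by (simp add: power_Suc2 del: power_Suc)
    then have "W * ((u ^ Suc n - st u ^ Suc n) * R) = W * (u ^ Suc (Suc n) - st u ^ Suc (Suc n)) + W * (u ^ n - st u ^ n)"
      by (simp only: distrib_left)
    then show ?thesis by (simp add: mult.assoc)
  qed
  show ?case using Suc unfolding e1 e2 by (simp add: gen_diff gen_mult Kc_R)
qed

lemma key_Kc:
  assumes x: "x \<in> O2a"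
  shows "x * up h + \<sigma> x * up (- h) \<in> Kc"
proof -
  obtain a b where ab: "a \<in> TVa" "b \<in> TVa" "x = a + b * W" using O2a_dec[OF x] by blast
  have sx: "\<sigma> x = a - b * W" using ab by (simp add: sig_add sig_mult TVa_sig sig_W)
  have aK: "a \<in> Kc" and bK: "b \<in> Kc" using ab TVa_gen by auto
  show ?thesis
  proof (cases "h \<ge> 0")
    case True
    define n where "n = nat h"
    have "up h = u ^ n" "up (- h) = st u ^ n" using True by (auto simp: upow_def n_def)
    then have "x * up h + \<sigma> x * up (- h) = a * (u ^ n + st u ^ n) + b * (W * (u ^ n - st u ^ n))"
      unfolding sx by (simp add: ab(3) algebra_simps)
    then show ?thesis using cheb[of n] aK bK by (simp add: gen_add gen_mult)
  next
    case False
    define n where "n = nat (- h)"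
    have "up h = st u ^ n" "up (- h) = u ^ n" using False by (auto simp: upow_def n_def)
    then have "x * up h + \<sigma> x * up (- h) = a * (u ^ n + st u ^ n) - b * (W * (u ^ n - st u ^ n))"
      unfolding sx by (simp add: ab(3) algebra_simps)
    then show ?thesis using cheb[of n] aK bK by (simp add: gen_diff gen_mult)
  qed
qed

lemma main1: "{a. \<sigma> a = a} = Kc"
proof
  show "{a. \<sigma> a = a} \<subseteq> Kc" using fix_in[OF key_Kc] by blast
  show "Kc \<subseteq> {a. \<sigma> a = a}"
    by (rule gen_min[OF _ csub_fix]) (auto simp: sig_T sig_V sig_R)
qed

lemma O2a_O2: "x \<in> O2a \<Longrightarrow> x \<in> cstar_gen sc st {u * s2, s2}"
proof (induct rule: O2a.induct)
  case o_s1 then show ?case using gen_sub[of "{u * s2, s2}"] by (auto simp: s1_def)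
next
  case o_s2 then show ?case using gen_sub[of "{u * s2, s2}"] by auto
next
  case o_sts1 then show ?case using gen_sub[of "{u * s2, s2}"] by (auto simp: s1_def intro: gen_st)
next
  case o_sts2 then show ?case using gen_sub[of "{u * s2, s2}"] by (auto intro: gen_st)
qed (auto intro: gen_one gen_add gen_mult gen_sc)

lemma O2_sig2: "x \<in> cstar_gen sc st {u * s2, s2} \<Longrightarrow> \<sigma> (\<sigma> x) = x"
proof -
  have "cstar_gen sc st {u * s2, s2} \<subseteq> {a. \<sigma> (\<sigma> a) = a}"
    by (rule gen_min[OF _ csub_fix2])
       (auto simp: sig_mult sigma_u sigma_s2 sig_st mult.assoc[symmetric] unitary1 unitary2)
  then show "x \<in> cstar_gen sc st {u * s2, s2} \<Longrightarrow> \<sigma> (\<sigma> x) = x" by blast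
qed

lemma main2: "{a. \<sigma> a = a} = cstar_gen sc st
   {x * upow st u h + \<sigma> x * upow st u (- h) | x h. x \<in> cstar_gen sc st {u * s2, s2}}"
  (is "_ = cstar_gen sc st ?G")
proof
  have K: "x * up h + \<sigma> x * up (- h) \<in> cstar_gen sc st ?G" if x: "x \<in> O2a" for x h
  proof -
    have "x * up h + \<sigma> x * up (- h) \<in> ?G" using O2a_O2[OF x] by blast
    then show ?thesis using gen_sub[of ?G] by blast
  qed
  show "{a. \<sigma> a = a} \<subseteq> cstar_gen sc st ?G"
    using fix_in[OF K] by blast
  show "cstar_gen sc st ?G \<subseteq> {a. \<sigma> a = a}"
  proof (rule gen_min[OF _ csub_fix], rule subsetI)
    fix y assume "y \<in> ?G"
    then obtain x h where y: "y = x * up h + \<sigma> x * up (- h)" and x: "x \<in> cstar_gen sc st {u * s2, s2}"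
      by blast
    have "\<sigma> y = \<sigma> x * up (- h) + \<sigma> (\<sigma> x) * up h"
      unfolding y by (simp add: sig_add sig_mult sig_up)
    also have "\<dots> = y" unfolding y O2_sig2[OF x] by (rule add.commute)
    finally show "y \<in> {a. \<sigma> a = a}" by simp
  qed
qed

end

theorem theorem4p5:
  fixes sc :: "complex \<Rightarrow> 'a::{banach,real_normed_algebra_1} \<Rightarrow> 'a" and st :: "'a \<Rightarrow> 'a"
    and u s2 :: "'a" and \<sigma> :: "'a \<Rightarrow> 'a"
  assumes cstar: "cstar_algebra sc st"
    and gen: "cstar_gen sc st {u, s2} = UNIV"
    and unitary: "st u * u = 1" "u * st u = 1"
    and isometry: "st s2 * s2 = 1"
    and rel1: "s2 * u = u ^ 2 * s2"
    and rel2: "s2 * st s2 + u * s2 * st s2 * st u = 1"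
    and aut: "star_automorphism sc st \<sigma>"
    and sigma_s2: "\<sigma> s2 = u * s2"
    and sigma_u: "\<sigma> u = st u"
  shows "{a. \<sigma> a = a} =
           cstar_gen sc st
             {scaleR (1 / sqrt 2) (u * s2 + s2),
              scaleR (1 / sqrt 2) ((u * s2 - s2) * (u * s2 * st (u * s2) - s2 * st s2)),
              u + st u}
       \<and> {a. \<sigma> a = a} =
           cstar_gen sc st
             {x * upow st u h + \<sigma> x * upow st u (- h) | x h.
                x \<in> cstar_gen sc st {u * s2, s2}}"
  proof -
  interpret Q: Q2 sc st u s2 \<sigma>
    by (rule Q2.intro) (fact cstar gen unitary isometry rel1 rel2 aut sigma_s2 sigma_u)+
  have e: "{scaleR (1 / sqrt 2) (u * s2 + s2),
              scaleR (1 / sqrt 2) ((u * s2 - s2) * (u * s2 * st (u * s2) - s2 * st s2)),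
              u + st u} = {Q.T, Q.V, Q.R}"
    by (simp add: Q.T_def Q.V_def Q.t2_def Q.W_def Q.s1_def Q.rr_def Q.R_def)
  show ?thesis using Q.main1 Q.main2 e by simp
qed

end
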